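(* Let $\widehat V=\widehat S+\widehat F\in\mathrm{End}(\mathbb R^n)$ with $\widehat S^\top=\widehat S$, $\widehat F^\top=-\widehat F$, and let $H(\tilde\rho,y)=\tfrac12\|y\|^2+\langle y,\widehat V\tilde\rho\rangle$ on $N=\mathbb R^{2n}$ with symplectic form $\Omega=d\tilde\rho^i\wedge dy_i$, extended holomorphically (bilinearly) to $N_{\mathbb C}\simeq\mathbb C^{2n}$, with complex Hamiltonian vector field $X_H(\tilde\rho,y)=(a,b)=(y+\widehat V\tilde\rho,\,-\widehat V^\top y)$. Let $M_\ast=(1-i)I$ (so $\mathrm{Im}\,M_\ast=-I$), and let $\Pi^{(+)}_{M_\ast}$ be the projector of $\mathbb C^n\oplus\mathbb C^n$ onto $L^{(+)}=\{(u,M_\ast u)\}$ along $L^{(-)}=\{(u,\bar M_\ast u)\}$, explicitly $\Pi^{(+)}_{M_\ast}(a,b)=(u,M_\ast u)$ with $u=(2i\,\mathrm{Im}\,M_\ast)^{-1}(b-\bar M_\ast a)$. Consider the projected dynamics $\dot z=\Pi^{(+)}_{M_\ast}X_H(z)$ for $z=(\tilde\rho,y)\in\mathbb C^{2n}$, and set $\psi=(1-i)\tilde\rho+iy$, $\phi=(1+i)\tilde\rho-iy$. Then each affine leaf $\{\phi=\phi_0\}$ is invariant under this dynamics (in particular $\{\phi=0\}$ is invariant), and on $\{\phi=0\}$ one has $i\dot\psi=(I+\widehat S+i\widehat F)\psi$. Equivalently, $\Psi(t):=e^{it}\psi(t)$ satisfies $i\dot\Psi=(\widehat S+i\widehat 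F)\Psi$.
   Context: $\langle\cdot,\cdot\rangle$, $\|\cdot\|$ denote the Euclidean inner product/norm, extended complex-bilinearly where needed. *)

theory Defs
  imports "HOL-Analysis.Analysis"
begin

text \<open>Holomorphic (complex-bilinear) extension of a real matrix to complex vectors:
  entrywise inclusion of the real matrix into the complex matrices.\<close>
definition cmat :: "real^'n^'m \<Rightarrow> complex^'n^'m" where
  "cmat A = (\<chi> i j. complex_of_real (A $ i $ j))"

definition conj_mat :: "complex^'n^'m \<Rightarrow> complex^'n^'m" where
  "conj_mat M = (\<chi> i j. cnj (M $ i $ j))"

definition Im_mat :: "complex^'n^'m \<Rightarrow> real^'n^'m" where
  "Im_mat M = (\<chi> i j. Im (M $ i $ j))"

definition XH :: "real^'n^'n \<Rightarrow> (complex^'n) \<times> (complex^'n) \<Rightarrow> (complex^'n) \<times> (complex^'n)" where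
  "XH V z = (snd z + cmat V *v fst z, - (cmat (transpose V) *v snd z))"

definition Pi_plus :: "complex^'n^'n \<Rightarrow> (complex^'n) \<times> (complex^'n) \<Rightarrow> (complex^'n) \<times> (complex^'n)" where
  "Pi_plus M ab =
     (let u = matrix_inv ((\<chi> i j. 2 * \<i> * complex_of_real (Im_mat M $ i $ j)))
              *v (snd ab - conj_mat M *v fst ab)
      in (u, M *v u))"

definition Mstar :: "complex^'n^'n" where
  "Mstar = mat (1 - \<i>)"

definition psi_of :: "(complex^'n) \<times> (complex^'n) \<Rightarrow> complex^'n" where
  "psi_of z = (1 - \<i>) *s fst z + \<i> *s snd z"

definition phi_of :: "(complex^'n) \<times> (complex^'n) \<Rightarrow> complex^'n" where
  "phi_of z = (1 + \<i>) *s fst z - \<i> *s snd z"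

end

theory Submission imports Defs begin

lemma ifmul: "(if P then (c::complex) else 0) * y = (if P then c * y else 0)" by simp

lemma mat_smult: "mat (c::complex) *v x = c *s x"
  by (simp add: vec_eq_iff matrix_vector_mult_def mat_def ifmul)

lemma mat_mult_vec: "(mat (c::complex) ** A) *v x = c *s (A *v x)"
  by (simp add: matrix_vector_mul_assoc[symmetric] mat_smult)

lemma mat_mat: "mat (a::complex) ** mat b = mat (a*b)"
  by (simp add: vec_eq_iff matrix_matrix_mult_def mat_def ifmul)

lemma matrix_inv_mat: assumes "(c::complex) \<noteq> 0" shows "matrix_inv (mat c :: complex^'n^'n) = mat (inverse c)"
proof -
  let ?P = "\<lambda>A'::complex^'n^'n. mat c ** A' = mat 1 \<and> A' ** mat c = mat 1"
  have ex: "?P (mat (inverse c))" using assms by (simp add: mat_mat)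
  have "?P (matrix_inv (mat c))" unfolding matrix_inv_def by (rule someI, rule ex)
  then have h: "mat c ** matrix_inv (mat c :: complex^'n^'n) = mat 1" by (rule conjunct1)
  have "matrix_inv (mat c) = (mat (inverse c) ** mat c) ** matrix_inv (mat c :: complex^'n^'n)"
    using assms by (simp add: mat_mat)
  also have "\<dots> = mat (inverse c)" by (simp add: matrix_mul_assoc[symmetric] h)
  finally show ?thesis .
qed

lemma bb_smult: "bounded_bilinear (\<lambda>(c::complex) (x::complex^'n). c *s x)"
  unfolding bilinear_conv_bounded_bilinear[symmetric] bilinear_def
  by (auto intro!: linearI simp: vec_eq_iff algebra_simps)

lemma Pi_plus_Mstar: "Pi_plus Mstar ab = (let u = (\<i>/2) *s (snd ab - (1+\<i>) *s fst ab) in (u, (1-\<i>) *s u))"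
proof -
  have A: "(\<chi> i j. 2 * \<i> * complex_of_real (Im_mat (Mstar::complex^'n^'n) $ i $ j)) = (mat (-2*\<i>) :: complex^'n^'n)"
    by (simp add: vec_eq_iff Mstar_def Im_mat_def mat_def)
  have B: "conj_mat (Mstar::complex^'n^'n) = mat (1+\<i>)"
    by (simp add: vec_eq_iff Mstar_def conj_mat_def mat_def)
  have C: "inverse (-2*\<i>) = \<i>/2" by (simp add: field_simps)
  show ?thesis unfolding Pi_plus_def A B matrix_inv_mat[of "-2*\<i>"] C mat_smult
    by (simp add: matrix_inv_mat mat_smult Mstar_def Let_def vec_eq_iff algebra_simps)
qed

lemma cmat_add: "cmat (A + B) = cmat A + cmat B" by (simp add: vec_eq_iff cmat_def)
lemma cmat_diff: "cmat (A - B) = cmat A - cmat B" by (simp add: vec_eq_iff cmat_def)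

lemma key:
  fixes S F V :: "real^'n^'n" and r y :: "complex^'n"
  assumes "transpose S = S" and "transpose F = - F" and "V = S + F"
    and ph: "(1+\<i>) *s r - \<i> *s y = 0"
  shows "\<i> *s (2 *s ((\<i>/2) *s (-(cmat (transpose V) *v y) - (1+\<i>) *s (y + cmat V *v r))))
    = (mat 1 + cmat S + mat \<i> ** cmat F) *v ((1-\<i>) *s r + \<i> *s y)"
proof -
  have ta: "transpose (S + F) = transpose S + transpose F" by (simp add: vec_eq_iff transpose_def)
  have tV: "transpose V = S - F" unfolding assms(3) ta assms(1,2) by simp
  have yr: "y = (1-\<i>) *s r"
  proof -
    have e: "\<i> *s y = (1+\<i>) *s r" using ph by simp
    have "\<And>k. \<i> * y$k = (1+\<i>) * r$k" by (metis e vector_smult_component)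
    then have "\<And>k. (-\<i>) * (\<i> * y$k) = (-\<i>) * ((1+\<i>) * r$k)" by simp
    then have "\<And>k. y$k = (1-\<i>) * r$k" by (simp add: algebra_simps mult.assoc[symmetric])
    then show ?thesis by (simp add: vec_eq_iff algebra_simps)
  qed
  have cV: "cmat V = cmat S + cmat F" unfolding assms(3) cmat_add ..
  have two: "\<And>A::complex^'n^'n. \<And>x. A *v (2 * x) = 2 * (A *v x)"
    by (simp add: vec_eq_iff matrix_vector_mult_def sum_distrib_left algebra_simps)
  show ?thesis unfolding tV yr cV cmat_diff
    apply (simp add: two vector_scalar_commute mat_mult_vec
        matrix_vector_mult_add_rdistrib matrix_vector_mult_diff_rdistrib mat_smult
        matrix_vector_right_distrib matrix_vector_mult_diff_distrib vec_eq_iff)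
    apply (simp add: algebra_simps)
    done
qed

lemma deriv_lin:
  fixes z :: "real \<Rightarrow> (complex^'n) \<times> (complex^'n)"
  assumes "(z has_vector_derivative (d1, d2)) (at t)"
  shows "((\<lambda>s. a *s fst (z s) + b *s snd (z s)) has_vector_derivative (a *s d1 + b *s d2)) (at t)"
proof -
  have f: "((\<lambda>s. fst (z s)) has_vector_derivative d1) (at t)"
    using bounded_linear.has_vector_derivative[OF bounded_linear_fst assms] by simp
  have g: "((\<lambda>s. snd (z s)) has_vector_derivative d2) (at t)"
    using bounded_linear.has_vector_derivative[OF bounded_linear_snd assms] by simp
  show ?thesis
    by (intro has_vector_derivative_add
        bounded_bilinear.bounded_linear_right[OF bb_smult, THEN bounded_linear.has_vector_derivative] f g)
qed

lemma deriv_exp: "((\<lambda>s. exp (\<i> * complex_of_real s)) has_vector_derivative (\<i> * exp (\<i> * complex_of_real t))) (at t)"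
proof -
  have "((\<lambda>x. exp (\<i> * x)) has_field_derivative (\<i> * exp (\<i> * complex_of_real t))) (at (complex_of_real t))"
    by (auto intro!: derivative_eq_intros)
  from has_vector_derivative_real_field[OF this] show ?thesis by simp
qed

theorem mainTheorem9:
  fixes S F V :: "real^'n^'n"
    and z :: "real \<Rightarrow> (complex^'n) \<times> (complex^'n)"
    and T :: "real set"
  assumes "transpose S = S" and "transpose F = - F" and "V = S + F"
    and "open T" and "is_interval T"
    and "\<And>t. t \<in> T \<Longrightarrow> (z has_vector_derivative Pi_plus Mstar (XH V (z t))) (at t)"
  shows "(\<forall>s\<in>T. \<forall>t\<in>T. phi_of (z s) = phi_of (z t))
    \<and> (\<forall>t\<in>T. phi_of (z t) = 0 \<longrightarrow>
          (\<exists>w. ((\<lambda>s. psi_of (z s)) has_vector_derivative w) (at t)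
               \<and> \<i> *s w = (mat 1 + cmat S + mat \<i> ** cmat F) *v psi_of (z t))
        \<and> (\<exists>w. ((\<lambda>s. exp (\<i> * complex_of_real s) *s psi_of (z s)) has_vector_derivative w) (at t)
               \<and> \<i> *s w = (cmat S + mat \<i> ** cmat F) *v (exp (\<i> * complex_of_real t) *s psi_of (z t))))"
proof -
  define u where "u t = (\<i>/2) *s (snd (XH V (z t)) - (1+\<i>) *s fst (XH V (z t)))" for t
  have zd: "(z has_vector_derivative (u t, (1-\<i>) *s u t)) (at t)" if "t \<in> T" for t
    using assms(6)[OF that] unfolding Pi_plus_Mstar u_def Let_def .
  have phid: "((\<lambda>s. phi_of (z s)) has_vector_derivative 0) (at t)" if "t \<in> T" for t
  proof -
    have "((\<lambda>s. (1+\<i>) *s fst (z s) + (-\<i>) *s snd (z s)) has_vector_derivative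
       ((1+\<i>) *s u t + (-\<i>) *s ((1-\<i>) *s u t))) (at t)"
      by (rule deriv_lin[OF zd[OF that]])
    moreover have "(1+\<i>) *s u t + (-\<i>) *s ((1-\<i>) *s u t) = 0"
      by (simp add: vec_eq_iff algebra_simps)
    moreover have "(\<lambda>s. phi_of (z s)) = (\<lambda>s. (1+\<i>) *s fst (z s) + (-\<i>) *s snd (z s))"
      by (simp add: phi_of_def fun_eq_iff vector_smult_lneg)
    ultimately show ?thesis by simp
  qed
  have part1: "\<forall>s\<in>T. \<forall>t\<in>T. phi_of (z s) = phi_of (z t)"
  proof -
    have "convex T" using assms(5) by (simp add: is_interval_convex)
    moreover have "((\<lambda>s. phi_of (z s)) has_derivative (\<lambda>h. 0)) (at x within T)" if "x \<in> T" for x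
      using has_vector_derivative_at_within[OF phid[OF that], of T]
      by (simp add: has_vector_derivative_def)
    ultimately obtain c where "\<forall>x\<in>T. phi_of (z x) = c"
      using has_derivative_zero_constant[of T "\<lambda>s. phi_of (z s)"] by blast
    then show ?thesis by simp
  qed
  have part2: "(\<exists>w. ((\<lambda>s. psi_of (z s)) has_vector_derivative w) (at t)
               \<and> \<i> *s w = (mat 1 + cmat S + mat \<i> ** cmat F) *v psi_of (z t))
        \<and> (\<exists>w. ((\<lambda>s. exp (\<i> * complex_of_real s) *s psi_of (z s)) has_vector_derivative w) (at t)
               \<and> \<i> *s w = (cmat S + mat \<i> ** cmat F) *v (exp (\<i> * complex_of_real t) *s psi_of (z t)))"
    if tT: "t \<in> T" and ph0: "phi_of (z t) = 0" for t
  proof -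
    have psd: "((\<lambda>s. psi_of (z s)) has_vector_derivative (2 *s u t)) (at t)"
    proof -
      have "((\<lambda>s. (1-\<i>) *s fst (z s) + \<i> *s snd (z s)) has_vector_derivative
         ((1-\<i>) *s u t + \<i> *s ((1-\<i>) *s u t))) (at t)"
        by (rule deriv_lin[OF zd[OF tT]])
      moreover have "(1-\<i>) *s u t + \<i> *s ((1-\<i>) *s u t) = 2 *s u t"
        by (simp add: vec_eq_iff algebra_simps)
      ultimately show ?thesis by (simp add: psi_of_def)
    qed
    have eq: "\<i> *s (2 *s u t) = (mat 1 + cmat S + mat \<i> ** cmat F) *v psi_of (z t)"
      unfolding u_def XH_def psi_of_def
      using key[OF assms(1-3), of "fst (z t)" "snd (z t)"] ph0 by (simp add: phi_of_def)
    define E where "E = exp (\<i> * complex_of_real t)"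
    have ed: "((\<lambda>s. exp (\<i> * complex_of_real s) *s psi_of (z s)) has_vector_derivative
        (E *s (2 *s u t) + (\<i> * E) *s psi_of (z t))) (at t)"
      unfolding E_def by (rule bounded_bilinear.has_vector_derivative[OF bb_smult deriv_exp psd])
    have "\<i> *s (E *s (2 *s u t) + (\<i> * E) *s psi_of (z t))
       = E *s (\<i> *s (2 *s u t)) - E *s psi_of (z t)"
      by (simp add: vec_eq_iff algebra_simps)
    also have "\<dots> = (cmat S + mat \<i> ** cmat F) *v (E *s psi_of (z t))"
      unfolding eq
      by (simp add: vector_scalar_commute matrix_vector_mult_add_rdistrib vector_add_ldistrib)
    finally show ?thesis using psd eq ed unfolding E_def by blast
  qed
  show ?thesis using part1 part2 by blast
qed

end
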